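(* Let $X=\ell_\infty^{(3)}$ over $\mathbb{C}$, $V=\{z\in X: z_1+z_2+z_3=0\}$, and define $P:X\to V$ by $Pz=z-\frac{z_1+z_2+z_3}{3}(1,1,1)$. Then $P\in\mathcal{P}(X,V)$, $\|P\|_w=\|P\|=4/3$, and $P$ has minimal numerical radius among all elements of $\mathcal{P}(X,V)$. However, $P$ is not a strongly unique minimal projection with respect to the numerical radius: there is no $r>0$ such that $\|Q\|_w\ge\|P\|_w+r\|Q-P\|_w$ for all $Q\in\mathcal{P}(X,V)$ (equivalently, $0$ is not a strongly unique best approximation to $P$ in $B_V(X,V)=\{L\in B(X,V):L|_V=0\}$ with respect to $\|\cdot\|_w$).
   Context: $\ell_\infty^{(3)}$ is $\mathbb{C}^3$ with the max norm. $\mathcal{P}(X,V)$ is the set of linear projections from $X$ onto $V$ (linear $Q:X\to V$ with $Qv=v$ for $v\in V$). For an operator $T$ on $X$, $\|T\|$ is the operator norm and $\|T\|_w=\sup\{|x^*(Tx)|:x\in S_X,x^*\in S_{X^*},x^*(x)=1\}$ the numerical radius. *)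

theory Defs
  imports "HOL-Analysis.Analysis"
begin

text \<open>X = ell_infinity^(3) over C: vectors in complex^3 with the max norm.
  Its dual is ell_1^(3) via the bilinear pairing (sum i. y_i x_i).\<close>

definition linf :: "complex ^ 3 \<Rightarrow> real" where
  "linf x = Max (range (\<lambda>i. cmod (x $ i)))"

definition l1 :: "complex ^ 3 \<Rightarrow> real" where
  "l1 y = (\<Sum>i\<in>UNIV. cmod (y $ i))"

definition pairing :: "complex ^ 3 \<Rightarrow> complex ^ 3 \<Rightarrow> complex" where
  "pairing y x = (\<Sum>i\<in>UNIV. y $ i * x $ i)"

definition is_clinear :: "(complex ^ 3 \<Rightarrow> complex ^ 3) \<Rightarrow> bool" where
  "is_clinear T \<longleftrightarrow> (\<forall>x y. T (x + y) = T x + T y) \<and> (\<forall>c x. T (c *s x) = c *s T x)"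

definition opnorm :: "(complex ^ 3 \<Rightarrow> complex ^ 3) \<Rightarrow> real" where
  "opnorm T = (SUP x\<in>{x. linf x = 1}. linf (T x))"

definition numrad :: "(complex ^ 3 \<Rightarrow> complex ^ 3) \<Rightarrow> real" where
  "numrad T = (SUP p\<in>{(x, y). linf x = 1 \<and> l1 y = 1 \<and> pairing y x = 1}.
                  cmod (pairing (snd p) (T (fst p))))"

definition Vsub :: "(complex ^ 3) set" where
  "Vsub = {z. z $ 1 + z $ 2 + z $ 3 = 0}"

definition projs :: "(complex ^ 3 \<Rightarrow> complex ^ 3) set" where
  "projs = {Q. is_clinear Q \<and> (\<forall>x. Q x \<in> Vsub) \<and> (\<forall>v\<in>Vsub. Q v = v)}"

definition Pproj :: "complex ^ 3 \<Rightarrow> complex ^ 3" where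
  "Pproj z = z - ((z $ 1 + z $ 2 + z $ 3) / 3) *s (\<chi> i. 1)"

end

theory Submission imports Defs begin

lemma linf_ge: "cmod (x $ i) \<le> linf x"
  unfolding linf_def by (rule Max_ge) auto

lemma linf_le: "(\<And>i. cmod (x $ i) \<le> B) \<Longrightarrow> linf x \<le> B"
  unfolding linf_def by (subst Max_le_iff) auto

lemma linf_nonneg: "0 \<le> linf x"
  using linf_ge[of x 1] norm_ge_zero order_trans by blast

lemma pairing_bound: "cmod (pairing y z) \<le> l1 y * linf z"
proof -
  have "cmod (pairing y z) \<le> (\<Sum>i\<in>UNIV. cmod (y $ i * z $ i))"
    unfolding pairing_def by (rule norm_sum)
  also have "\<dots> \<le> (\<Sum>i\<in>UNIV. cmod (y $ i) * linf z)"
    by (rule sum_mono) (simp add: norm_mult mult_left_mono linf_ge)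
  also have "\<dots> = l1 y * linf z" unfolding l1_def by (simp add: sum_distrib_right)
  finally show ?thesis .
qed

definition sv :: "complex^3 \<Rightarrow> complex" where "sv z = z$1+z$2+z$3"
definition Tw :: "complex^3 \<Rightarrow> complex^3 \<Rightarrow> complex^3" where
  "Tw w x = Pproj x + (sv x / 3) *s w"

lemma Pproj_comp: "Pproj x $ i = x $ i - sv x / 3"
  by (simp add: Pproj_def sv_def)

lemma Tw_comp: "Tw w x $ i = x $ i - sv x / 3 + sv x / 3 * w $ i"
  by (simp add: Tw_def Pproj_comp)

lemma Pproj_V: "Pproj x \<in> Vsub"
  by (simp add: Vsub_def Pproj_comp sv_def algebra_simps)

lemma Tw_proj: assumes "w \<in> Vsub" shows "Tw w \<in> projs"
proof -
  have w: "w$1 + w$2 + w$3 = 0" using assms by (simp add: Vsub_def)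
  have "is_clinear (Tw w)" unfolding is_clinear_def
    by (auto simp: vec_eq_iff Tw_comp sv_def field_simps)
  moreover have "Tw w x \<in> Vsub" for x
  proof -
    have "Tw w x $ 1 + Tw w x $ 2 + Tw w x $ 3 = sv x / 3 * (w$1 + w$2 + w$3)"
      by (simp add: Tw_comp sv_def field_simps)
    then show ?thesis using w by (simp add: Vsub_def)
  qed
  moreover have "Tw w v = v" if "v \<in> Vsub" for v
    using that by (simp add: vec_eq_iff Tw_comp Vsub_def sv_def)
  ultimately show ?thesis by (simp add: projs_def)
qed

lemma projs_Tw: assumes "Q \<in> projs" shows "Q = Tw (Q (\<chi> i. 1))" "Q (\<chi> i. 1) \<in> Vsub"
proof -
  have lin: "is_clinear Q" and V: "\<And>x. Q x \<in> Vsub" and id: "\<And>v. v \<in> Vsub \<Longrightarrow> Q v = v"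
    using assms by (auto simp: projs_def)
  show "Q (\<chi> i. 1) \<in> Vsub" by (rule V)
  show "Q = Tw (Q (\<chi> i. 1))"
  proof
    fix x
    have "x = Pproj x + (sv x / 3) *s (\<chi> i. 1)"
      by (simp add: vec_eq_iff Pproj_comp)
    then have "Q x = Q (Pproj x) + (sv x / 3) *s Q (\<chi> i. 1)"
      using lin unfolding is_clinear_def by metis
    also have "\<dots> = Tw (Q (\<chi> i. 1)) x" by (simp add: id Pproj_V Tw_def)
    finally show "Q x = Tw (Q (\<chi> i. 1)) x" .
  qed
qed


lemma sv_minus_bound: assumes "linf x \<le> 1" shows "cmod (sv x - x $ i) \<le> 2"
proof -
  have b: "cmod (x$j) \<le> 1" for j using linf_ge[of x j] assms by linarith
  have "cmod (x$1 + x$2) \<le> 2" using norm_triangle_ineq[of "x$1" "x$2"] b[of 1] b[of 2] by linarith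
  moreover have "cmod (x$1 + x$3) \<le> 2" using norm_triangle_ineq[of "x$1" "x$3"] b[of 1] b[of 3] by linarith
  moreover have "cmod (x$2 + x$3) \<le> 2" using norm_triangle_ineq[of "x$2" "x$3"] b[of 2] b[of 3] by linarith
  moreover have "i = 1 \<or> i = 2 \<or> i = 3" using exhaust_3 by blast
  ultimately show ?thesis by (auto simp: sv_def)
qed

lemma sv_bound: assumes "linf x \<le> 1" shows "cmod (sv x) \<le> 3"
proof -
  have b: "cmod (x$j) \<le> 1" for j using linf_ge[of x j] assms by linarith
  have "cmod (sv x) \<le> cmod (x$1 + x$2) + cmod (x$3)" unfolding sv_def by (rule norm_triangle_ineq)
  also have "\<dots> \<le> cmod (x$1) + cmod (x$2) + cmod (x$3)" using norm_triangle_ineq by simp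
  finally show ?thesis using b[of 1] b[of 2] b[of 3] by linarith
qed

lemma row_bound: assumes "linf x \<le> 1"
  shows "cmod (x$i + sv x * c) \<le> cmod (1 + c) + 2 * cmod c"
proof -
  have "x$i + sv x * c = (1+c) * x$i + c * (sv x - x$i)" by (simp add: algebra_simps)
  then have "cmod (x$i + sv x * c) \<le> cmod (1+c) * cmod (x$i) + cmod c * cmod (sv x - x$i)"
    by (metis norm_mult norm_triangle_ineq)
  also have "\<dots> \<le> cmod (1+c) * 1 + cmod c * 2"
    using linf_ge[of x i] assms sv_minus_bound[OF assms, of i]
    by (intro add_mono mult_left_mono) simp_all
  finally show ?thesis by simp
qed

lemma Tw_comp2: "Tw w x $ i = x $ i + sv x * ((w$i - 1)/3)"
  by (simp add: Tw_comp field_simps)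

lemma Tw_bound: assumes "linf x \<le> 1" shows "linf (Tw w x) \<le> 4/3 + linf w"
proof (rule linf_le)
  fix i
  have "cmod (Tw w x $ i) \<le> cmod (1 + (w$i - 1)/3) + 2 * cmod ((w$i - 1)/3)"
    unfolding Tw_comp2 by (rule row_bound[OF assms])
  also have "\<dots> = cmod ((w$i + 2)/3) + 2 * cmod ((w$i - 1)/3)"
    by (simp add: field_simps)
  also have "\<dots> \<le> (cmod (w$i) + 2)/3 + 2 * ((cmod (w$i) + 1)/3)"
    using norm_triangle_ineq[of "w$i" 2] norm_triangle_ineq4[of "w$i" 1]
    by (intro add_mono) (auto simp: norm_divide)
  also have "\<dots> = 4/3 + cmod (w$i)" by (simp add: field_simps)
  also have "\<dots> \<le> 4/3 + linf w" using linf_ge by simp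
  finally show "cmod (Tw w x $ i) \<le> 4/3 + linf w" .
qed

lemma P_Tw: "Pproj = Tw 0"
  by (rule ext) (simp add: Tw_def)

definition NS where "NS = {(x, y). linf x = 1 \<and> l1 y = 1 \<and> pairing y x = 1}"

lemma one_vec: "linf (\<chi> i. 1) = 1"
  using linf_ge[of "\<chi> i. 1" 1] linf_le[of "\<chi> i. 1" 1] by simp

lemma l1_axis: "l1 (axis k 1) = 1"
  unfolding l1_def axis_def by (simp add: if_distrib cong: if_cong)

lemma pairing_axis: "pairing (axis k 1) z = z $ k"
  unfolding pairing_def axis_def by (simp add: if_distrib[of "\<lambda>c. c * _"] cong: if_cong)

lemma NS_ne: "((\<chi> i. 1), axis 1 1) \<in> NS"
  by (simp add: NS_def one_vec l1_axis pairing_axis)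

lemma numrad_bdd: assumes "\<And>x. linf x = 1 \<Longrightarrow> linf (T x) \<le> B"
  shows "bdd_above ((\<lambda>p. cmod (pairing (snd p) (T (fst p)))) ` NS)"
proof (rule bdd_aboveI2)
  fix p assume "p \<in> NS"
  then obtain x y where p: "p = (x,y)" "linf x = 1" "l1 y = 1" by (auto simp: NS_def)
  show "cmod (pairing (snd p) (T (fst p))) \<le> B"
    using pairing_bound[of y "T x"] assms[OF p(2)] p by simp
qed

lemma numrad_le: assumes "\<And>x. linf x = 1 \<Longrightarrow> linf (T x) \<le> B"
  shows "numrad T \<le> B"
  unfolding numrad_def NS_def[symmetric]
proof (rule cSUP_least)
  show "NS \<noteq> {}" using NS_ne by blast
  fix p assume "p \<in> NS"
  then obtain x y where p: "p = (x,y)" "linf x = 1" "l1 y = 1" by (auto simp: NS_def)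
  show "cmod (pairing (snd p) (T (fst p))) \<le> B"
    using pairing_bound[of y "T x"] assms[OF p(2)] p by simp
qed

lemma numrad_ge: assumes "\<And>x. linf x = 1 \<Longrightarrow> linf (T x) \<le> B"
  and "linf x = 1" "l1 y = 1" "pairing y x = 1"
  shows "cmod (pairing y (T x)) \<le> numrad T"
  unfolding numrad_def NS_def[symmetric]
  using cSUP_upper[OF _ numrad_bdd[OF assms(1)], of "(x,y)"] assms(2-4)
  by (simp add: NS_def)

lemma opnorm_le: assumes "\<And>x. linf x = 1 \<Longrightarrow> linf (T x) \<le> B"
  shows "opnorm T \<le> B"
  unfolding opnorm_def
  by (rule cSUP_least) (use one_vec assms in auto)

lemma opnorm_ge: assumes "\<And>x. linf x = 1 \<Longrightarrow> linf (T x) \<le> B"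
  and "linf x = 1"
  shows "linf (T x) \<le> opnorm T"
  unfolding opnorm_def
  by (rule cSUP_upper) (use assms in \<open>auto intro!: bdd_aboveI2\<close>)


lemma cmod_bound1: "cmod (Complex (2/3) t) \<le> 2/3 + t^2"
  unfolding complex_norm
proof (rule real_le_lsqrt)
  have e: "(2/3 + t^2)^2 = 4/9 + 4/3*t^2 + t^2*t^2" by (simp add: power2_eq_square algebra_simps)
  have "0 \<le> t^2*t^2" "0 \<le> t^2" by simp_all
  moreover have "(2/3::real)^2 = 4/9" by (simp add: power2_eq_square)
  ultimately show "(2/3)\<^sup>2 + t\<^sup>2 \<le> (2/3 + t^2)^2" unfolding e by linarith
qed simp

lemma cmod_bound2: "cmod (Complex (-1/3) t) \<le> 1/3 + 2*t^2"
  unfolding complex_norm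
proof (rule real_le_lsqrt)
  have e: "(1/3 + 2*t^2)^2 = 1/9 + 4/3*t^2 + 4*(t^2*t^2)" by (simp add: power2_eq_square algebra_simps)
  have "0 \<le> t^2*t^2" "0 \<le> t^2" by simp_all
  moreover have "(-1/3::real)^2 = 1/9" by (simp add: power2_eq_square)
  ultimately show "(-1/3)\<^sup>2 + t\<^sup>2 \<le> (1/3 + 2*t^2)^2" unfolding e by linarith
qed simp

definition xk :: "3 \<Rightarrow> complex^3" where "xk k = (\<chi> i. if i = k then 1 else -1)"

lemma xk_linf: "linf (xk k) = 1"
proof -
  have "linf (xk k) \<le> 1" by (rule linf_le) (simp add: xk_def)
  moreover have "1 \<le> linf (xk k)" using linf_ge[of "xk k" k] by (simp add: xk_def)
  ultimately show ?thesis by simp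
qed

lemma xk_sv: "sv (xk k) = -1"
proof -
  have "k = 1 \<or> k = 2 \<or> k = 3" using exhaust_3 by blast
  then show ?thesis unfolding sv_def xk_def by (elim disjE) simp_all
qed

lemma Tw_xk: "Tw w (xk k) $ k = 4/3 - w$k/3"
  by (simp add: Tw_comp xk_sv) (simp add: xk_def)

lemma linf_zero: "linf 0 = 0"
  using linf_le[of 0 0] linf_nonneg[of 0] by simp

lemma Tw_bound0: "linf x = 1 \<Longrightarrow> linf (Tw 0 x) \<le> 4/3"
  using Tw_bound[of x 0] by (simp add: linf_zero)

lemma Tw_lower: assumes "w \<in> Vsub" shows "4/3 \<le> numrad (Tw w)"
proof -
  have B: "\<And>x. linf x = 1 \<Longrightarrow> linf (Tw w x) \<le> 4/3 + linf w" using Tw_bound by simp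
  have pk: "pairing (axis k 1) (xk k) = 1" for k by (simp add: pairing_axis xk_def)
  have ge: "cmod (4/3 - w$k/3) \<le> numrad (Tw w)" for k
    using numrad_ge[of "Tw w" "4/3 + linf w", OF B xk_linf[of k] l1_axis[of k] pk[of k]] by (simp add: pairing_axis Tw_xk)
  have re0: "Re (4/3 - w$k/3) \<le> numrad (Tw w)" for k
    using ge[of k] complex_Re_le_cmod order_trans by blast
  have re1: "Re (4/3 - w$k/3) = 4/3 - Re (w$k)/3" for k by simp
  have re: "4/3 - Re (w$k)/3 \<le> numrad (Tw w)" for k using re0[of k] unfolding re1 .
  have s0: "w$1 + w$2 + w$3 = 0" using assms by (simp add: Vsub_def)
  have "Re (w$1) + Re (w$2) + Re (w$3) = Re (w$1 + w$2 + w$3)" by simp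
  then have "Re (w$1) + Re (w$2) + Re (w$3) = 0" unfolding s0 by simp
  then show ?thesis using re[of 1] re[of 2] re[of 3] by linarith
qed

theorem mainTheorem8:
  shows "Pproj \<in> projs \<and> numrad Pproj = 4/3 \<and> opnorm Pproj = 4/3
    \<and> (\<forall>Q\<in>projs. numrad Pproj \<le> numrad Q)
    \<and> \<not> (\<exists>r>0. \<forall>Q\<in>projs. numrad Q \<ge> numrad Pproj + r * numrad (\<lambda>x. Q x - Pproj x))"
proof -
  have V0: "0 \<in> Vsub" by (simp add: Vsub_def)
  have P1: "Pproj \<in> projs" using Tw_proj[OF V0] P_Tw by simp
  have NP: "numrad Pproj = 4/3"
    using numrad_le[of "Tw 0" "4/3", OF Tw_bound0] Tw_lower[OF V0] P_Tw by simp
  have "linf (Tw 0 (xk 1)) \<le> opnorm (Tw 0)" by (rule opnorm_ge[OF Tw_bound0 xk_linf])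
  moreover have "4/3 \<le> linf (Tw 0 (xk 1))" using linf_ge[of "Tw 0 (xk 1)" 1] by (simp add: Tw_xk)
  ultimately have OP: "opnorm Pproj = 4/3"
    using opnorm_le[of "Tw 0" "4/3", OF Tw_bound0] P_Tw by simp
  have MIN: "\<forall>Q\<in>projs. numrad Pproj \<le> numrad Q"
  proof
    fix Q assume Q: "Q \<in> projs"
    have "4/3 \<le> numrad (Tw (Q (\<chi> i. 1)))" by (rule Tw_lower[OF projs_Tw(2)[OF Q]])
    then show "numrad Pproj \<le> numrad Q" using projs_Tw(1)[OF Q] NP by simp
  qed
  have NSU: "\<not> (\<exists>r>0. \<forall>Q\<in>projs. numrad Q \<ge> numrad Pproj + r * numrad (\<lambda>x. Q x - Pproj x))"
  proof
    assume "\<exists>r>0. \<forall>Q\<in>projs. numrad Q \<ge> numrad Pproj + r * numrad (\<lambda>x. Q x - Pproj x)"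
    then obtain r where r: "r > 0" and H: "\<And>Q. Q \<in> projs \<Longrightarrow> numrad Q \<ge> 4/3 + r * numrad (\<lambda>x. Q x - Pproj x)"
      using NP by auto
    define t where "t = r/2"
    have t: "t > 0" using r t_def by simp
    define w :: "complex^3" where "w = vector [Complex 0 (3*t), Complex 0 (-3*t), 0]"
    have w1: "w$1 = Complex 0 (3*t)" and w2: "w$2 = Complex 0 (-3*t)" and w3: "w$3 = 0"
      by (simp_all add: w_def)
    have wV: "w \<in> Vsub" by (simp add: Vsub_def w1 w2 w3 complex_eq_iff)
    have rowb: "cmod (Tw w x $ i) \<le> 4/3 + 5*t^2" if x: "linf x = 1" for x i
    proof -
      have rb: "cmod (Tw w x $ i) \<le> cmod (1 + (w$i - 1)/3) + 2 * cmod ((w$i - 1)/3)"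
        unfolding Tw_comp2 by (rule row_bound) (use x in simp)
      have "i = 1 \<or> i = 2 \<or> i = 3" using exhaust_3 by blast
      moreover
      { assume i: "i = 1"
        have c1: "1 + (w$i - 1)/3 = Complex (2/3) t" and c2: "(w$i - 1)/3 = Complex (-1/3) t"
          unfolding i by (simp_all add: w1 complex_eq_iff)
        have c3: "1 + Complex (-1/3) t = Complex (2/3) t" by (simp add: complex_eq_iff)
        have ?thesis using rb cmod_bound1[of t] cmod_bound2[of t] unfolding c2 c3 by linarith }
      moreover
      { assume i: "i = 2"
        have c1: "1 + (w$i - 1)/3 = Complex (2/3) (-t)" and c2: "(w$i - 1)/3 = Complex (-1/3) (-t)"
          unfolding i by (simp_all add: w2 complex_eq_iff)
        have c3: "1 + Complex (-1/3) (-t) = Complex (2/3) (-t)" by (simp add: complex_eq_iff)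
        have ?thesis using rb cmod_bound1[of "-t"] cmod_bound2[of "-t"] unfolding c2 c3 by simp }
      moreover
      { assume i: "i = 3"
        have "0 \<le> 5 * t^2" by simp
        moreover have "cmod (Tw w x $ i) \<le> 4/3" using rb unfolding i by (simp add: w3)
        ultimately have ?thesis by linarith }
      ultimately show ?thesis by blast
    qed
    have up: "numrad (Tw w) \<le> 4/3 + 5*t^2"
      by (rule numrad_le[of "Tw w"], rule linf_le, rule rowb)
    have D: "(\<lambda>x. Tw w x - Pproj x) = (\<lambda>x. (sv x / 3) *s w)"
      by (rule ext) (simp add: Tw_def)
    have DB: "linf ((sv x / 3) *s w) \<le> linf w" if "linf x = 1" for x
    proof (rule linf_le)
      fix i
      have "cmod (sv x / 3) \<le> 1" using sv_bound[of x] that by (simp add: norm_divide)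
      then have "cmod (sv x / 3) * cmod (w$i) \<le> 1 * linf w"
        using linf_ge[of w i] by (intro mult_mono) auto
      then show "cmod (((sv x / 3) *s w) $ i) \<le> linf w" by (simp add: norm_mult)
    qed
    have sv1: "sv (\<chi> i. 1) = 3" by (simp add: sv_def)
    have "cmod (pairing (axis 1 1) ((sv (\<chi> i. 1) / 3) *s w)) \<le> numrad (\<lambda>x. (sv x / 3) *s w)"
      by (rule numrad_ge[OF DB one_vec l1_axis]) (auto simp: pairing_axis)
    moreover have "sqrt (9*t^2) = 3*t"
    proof -
      have e1: "sqrt (9*t^2) = sqrt ((3*t)^2)" by (simp add: power2_eq_square)
      have e2: "sqrt ((3*t)^2) = 3*t" using t by (simp only: real_sqrt_abs)
      show ?thesis using e1 e2 by (rule trans)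
    qed
    ultimately have lo: "3 * t \<le> numrad (\<lambda>x. Tw w x - Pproj x)"
      unfolding D by (simp add: pairing_axis sv1 w1 complex_norm)
    have "r * (3*t) \<le> r * numrad (\<lambda>x. Tw w x - Pproj x)"
      using lo r by (intro mult_left_mono) auto
    then have "4/3 + r * (3*t) \<le> numrad (Tw w)"
      using H[OF Tw_proj[OF wV]] by linarith
    then have "r * (3*t) \<le> 5*t^2" using up by linarith
    then have "6 * (t*t) \<le> 5 * (t*t)" by (simp add: t_def power2_eq_square)
    moreover have "0 < t*t" using t by simp
    ultimately show False by linarith
  qed
  show ?thesis using P1 NP OP MIN NSU by blast
qed

end
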